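(* Let $\Gamma$ be a distance-regular graph with diameter $D\ge3$. Let $\sigma_0,\dots,\sigma_D$ and $\rho_0,\dots,\rho_D$ be nontrivial pseudo cosine sequences forming a tight pair, and let $\varepsilon$ be an auxiliary parameter for this pair with $\varepsilon\notin\{1,-1\}$. Then $\sigma_{i-1}\ne\sigma_i$ and $\rho_{i-1}\ne\rho_i$ for $1\le i\le D$.
   Context: $\Gamma$ is a finite connected undirected graph without loops or multiple edges, distance-regular with diameter $D$, intersection numbers $a_i,b_i,c_i$ ($c_0=0$, $b_D=0$), valency $k$, $c_i+a_i+b_i=k$. For $\theta\in\mathbb{R}$ the pseudo cosine sequence for $\theta$ is the sequence of reals $\sigma_0,\dots,\sigma_D$ with $\sigma_0=1$ and $c_i\sigma_{i-1}+a_i\sigma_i+b_i\sigma_{i+1}=\theta\sigma_i$ for $0\le i\le D-1$; nontrivial means $\sigma_1\ne1$. Pseudo cosine sequences $\sigma_i$, $\rho_i$ form a tight pair if $(\sigma_i\rho_i)_{i=0}^D$ is a pseudo cosine sequence. For a tight pair of nontrivial pseudo cosine sequences, an auxiliary parameter is a real $\varepsilon$ with $\sigma_i\rho_i-\sigma_{i-1}\rho_{i-1}=\varepsilon(\sigma_{i-1}\rho_i-\sigma_i\rho_{i-1})$ for $1\le i\le D$. *)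

theory Defs
  imports Complex_Main
begin

inductive walk :: "('v \<Rightarrow> 'v \<Rightarrow> bool) \<Rightarrow> 'v \<Rightarrow> 'v \<Rightarrow> nat \<Rightarrow> bool"
  for E where
  walk_nil: "walk E x x 0"
| walk_step: "E x y \<Longrightarrow> walk E y z n \<Longrightarrow> walk E x z (Suc n)"

definition gdist :: "('v \<Rightarrow> 'v \<Rightarrow> bool) \<Rightarrow> 'v \<Rightarrow> 'v \<Rightarrow> nat" where
  "gdist E x y = (LEAST n. walk E x y n)"

definition connected_simple_graph :: "'v set \<Rightarrow> ('v \<Rightarrow> 'v \<Rightarrow> bool) \<Rightarrow> bool" where
  "connected_simple_graph V E \<longleftrightarrow>
     finite V \<and> V \<noteq> {} \<and>
     (\<forall>x y. E x y \<longrightarrow> x \<in> V \<and> y \<in> V \<and> x \<noteq> y \<and> E y x) \<and>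
     (\<forall>x\<in>V. \<forall>y\<in>V. \<exists>n. walk E x y n)"

definition diameter :: "'v set \<Rightarrow> ('v \<Rightarrow> 'v \<Rightarrow> bool) \<Rightarrow> nat" where
  "diameter V E = Max {gdist E x y | x y. x \<in> V \<and> y \<in> V}"

definition distance_regular ::
  "'v set \<Rightarrow> ('v \<Rightarrow> 'v \<Rightarrow> bool) \<Rightarrow> nat \<Rightarrow> (nat \<Rightarrow> nat) \<Rightarrow> (nat \<Rightarrow> nat) \<Rightarrow> (nat \<Rightarrow> nat) \<Rightarrow> bool"
  where
  "distance_regular V E D a b c \<longleftrightarrow>
     connected_simple_graph V E \<and> D = diameter V E \<and>
     (\<forall>x\<in>V. \<forall>y\<in>V.
        c (gdist E x y) = card {z\<in>V. E y z \<and> gdist E x z + 1 = gdist E x y} \<and>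
        a (gdist E x y) = card {z\<in>V. E y z \<and> gdist E x z = gdist E x y} \<and>
        b (gdist E x y) = card {z\<in>V. E y z \<and> gdist E x z = gdist E x y + 1})"

(* pseudo cosine sequence for theta (only indices 0..D are relevant);
   at i = 0 the term c_0 sigma_{-1} vanishes since c_0 = 0 *)
definition pseudo_cosine ::
  "nat \<Rightarrow> (nat \<Rightarrow> nat) \<Rightarrow> (nat \<Rightarrow> nat) \<Rightarrow> (nat \<Rightarrow> nat) \<Rightarrow> real \<Rightarrow> (nat \<Rightarrow> real) \<Rightarrow> bool"
  where
  "pseudo_cosine D a b c \<theta> \<sigma> \<longleftrightarrow>
     \<sigma> 0 = 1 \<and>
     (\<forall>i<D. (if i = 0 then 0 else real (c i) * \<sigma> (i - 1)) + real (a i) * \<sigma> i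
              + real (b i) * \<sigma> (i + 1) = \<theta> * \<sigma> i)"

definition is_pseudo_cosine ::
  "nat \<Rightarrow> (nat \<Rightarrow> nat) \<Rightarrow> (nat \<Rightarrow> nat) \<Rightarrow> (nat \<Rightarrow> nat) \<Rightarrow> (nat \<Rightarrow> real) \<Rightarrow> bool"
  where
  "is_pseudo_cosine D a b c \<sigma> \<longleftrightarrow> (\<exists>\<theta>. pseudo_cosine D a b c \<theta> \<sigma>)"

definition nontrivial_pc :: "(nat \<Rightarrow> real) \<Rightarrow> bool" where
  "nontrivial_pc \<sigma> \<longleftrightarrow> \<sigma> 1 \<noteq> 1"

definition tight_pair ::
  "nat \<Rightarrow> (nat \<Rightarrow> nat) \<Rightarrow> (nat \<Rightarrow> nat) \<Rightarrow> (nat \<Rightarrow> nat) \<Rightarrow> (nat \<Rightarrow> real) \<Rightarrow> (nat \<Rightarrow> real) \<Rightarrow> bool"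
  where
  "tight_pair D a b c \<sigma> \<rho> \<longleftrightarrow>
     is_pseudo_cosine D a b c \<sigma> \<and> is_pseudo_cosine D a b c \<rho> \<and>
     is_pseudo_cosine D a b c (\<lambda>i. \<sigma> i * \<rho> i)"

definition auxiliary_parameter ::
  "nat \<Rightarrow> (nat \<Rightarrow> real) \<Rightarrow> (nat \<Rightarrow> real) \<Rightarrow> real \<Rightarrow> bool" where
  "auxiliary_parameter D \<sigma> \<rho> \<epsilon> \<longleftrightarrow>
     (\<forall>i\<in>{1..D}. \<sigma> i * \<rho> i - \<sigma> (i - 1) * \<rho> (i - 1)
                 = \<epsilon> * (\<sigma> (i - 1) * \<rho> i - \<sigma> i * \<rho> (i - 1)))"

end

theory Submission
  imports Defs
begin

lemma walk_snoc: "walk E x y n \<Longrightarrow> E y z \<Longrightarrow> walk E x z (Suc n)"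
  by (induction rule: walk.induct) (auto intro: walk.intros)

lemma walk_app: "walk E x y m \<Longrightarrow> walk E y z n \<Longrightarrow> walk E x z (m + n)"
  by (induction rule: walk.induct) (auto intro: walk.intros)

lemma walk_split: "walk E x w (m + n) \<Longrightarrow> \<exists>v. walk E x v m \<and> walk E v w n"
proof (induction m arbitrary: x)
  case 0
  then show ?case by (auto intro: walk.intros)
next
  case (Suc m)
  from Suc.prems obtain y where "E x y" "walk E y w (m + n)"
    by (auto elim: walk.cases)
  with Suc.IH obtain v where "walk E y v m" "walk E v w n" by blast
  then show ?case using \<open>E x y\<close> by (auto intro: walk.intros)
qed

lemma walk_0: "walk E x y 0 \<Longrightarrow> x = y"
  by (auto elim: walk.cases)

lemma walk_V: "walk E x y n \<Longrightarrow> x \<in> V \<Longrightarrow> (\<forall>u v. E u v \<longrightarrow> u \<in> V \<and> v \<in> V) \<Longrightarrow> y \<in> V"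
  by (induction rule: walk.induct) auto

lemma gdist_le: "walk E x y n \<Longrightarrow> gdist E x y \<le> n"
  unfolding gdist_def by (rule Least_le)

lemma gdist_walk: "walk E x y n \<Longrightarrow> walk E x y (gdist E x y)"
  unfolding gdist_def by (rule LeastI)

lemma chain:
  assumes pc: "pseudo_cosine D a b c \<theta> f"
    and cpos: "\<forall>j. 1 \<le> j \<and> j < D \<longrightarrow> c j > 0"
  shows "f m = 0 \<Longrightarrow> f (m+1) = 0 \<Longrightarrow> m + 1 \<le> D \<Longrightarrow> False"
proof (induction m)
  case 0
  then show ?case using pc unfolding pseudo_cosine_def by simp
next
  case (Suc m)
  have "Suc m < D" using Suc.prems by simp
  then have "real (c (Suc m)) * f m + real (a (Suc m)) * f (Suc m)
              + real (b (Suc m)) * f (Suc m + 1) = \<theta> * f (Suc m)"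
    using pc unfolding pseudo_cosine_def
    apply -
    apply (drule conjunct2)
    apply (drule spec[of _ "Suc m"])
    by simp
  then have "real (c (Suc m)) * f m = 0" using Suc.prems by simp
  moreover have "c (Suc m) > 0" using cpos \<open>Suc m < D\<close> by simp
  ultimately have "f m = 0" by simp
  then show ?case using Suc by simp
qed

lemma core:
  assumes pf: "pseudo_cosine D a b c t1 f" and pg: "pseudo_cosine D a b c t2 g"
    and pp: "pseudo_cosine D a b c t3 (\<lambda>i. f i * g i)"
    and a0: "a 0 = 0" and D0: "0 < D"
    and j1: "1 \<le> j" and jD: "j < D"
    and cj: "c j > 0" and bj: "b j > 0" and sumj: "c j + a j + b j = b 0"
    and f1: "f 1 \<noteq> 1" and g1: "g 1 \<noteq> 1"
    and fe: "f (j+1) = f j" and ge: "g (j+1) = g j"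
    and fn: "f j \<noteq> 0" and gn: "g j \<noteq> 0"
  shows False
proof -
  define k where "k = real (b 0)"
  have t1: "t1 = k * f 1" using pf D0 a0 unfolding pseudo_cosine_def k_def
    apply - apply (elim conjE) apply (drule spec[of _ 0]) by simp
  have t2: "t2 = k * g 1" using pg D0 a0 unfolding pseudo_cosine_def k_def
    apply - apply (elim conjE) apply (drule spec[of _ 0]) by simp
  have t3: "t3 = k * (f 1 * g 1)" using pp D0 a0 unfolding pseudo_cosine_def k_def
    apply - apply (elim conjE) apply (drule spec[of _ 0]) by simp
  have j0: "j \<noteq> 0" using j1 by simp
  define C where "C = real (c j)"
  have kC: "k = C + real (a j) + real (b j)" unfolding k_def C_def using sumj
    by (metis of_nat_add)
  have rf: "C * f (j-1) + real (a j) * f j + real (b j) * f (j+1) = t1 * f j"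
    using pf jD j0 unfolding pseudo_cosine_def C_def by auto
  have rg: "C * g (j-1) + real (a j) * g j + real (b j) * g (j+1) = t2 * g j"
    using pg jD j0 unfolding pseudo_cosine_def C_def by auto
  have rp: "C * (f (j-1) * g (j-1)) + real (a j) * (f j * g j) + real (b j) * (f (j+1) * g (j+1)) = t3 * (f j * g j)"
    using pp jD j0 unfolding pseudo_cosine_def C_def by auto
  define x where "x = f 1 - 1"
  define y where "y = g 1 - 1"
  have ef: "C * f (j-1) = (k * x + C) * f j"
    using rf t1 kC fe unfolding x_def by (simp add: algebra_simps)
  have eg: "C * g (j-1) = (k * y + C) * g j"
    using rg t2 kC ge unfolding y_def by (simp add: algebra_simps)
  have ep: "C * (f (j-1) * g (j-1)) = (k * (x + y + x * y) + C) * (f j * g j)"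
    using rp t3 kC fe ge unfolding x_def y_def by (simp add: algebra_simps)
  have "(k * x + C) * (k * y + C) * (f j * g j) = ((k * x + C) * f j) * ((k * y + C) * g j)"
    by (simp add: algebra_simps)
  also have "\<dots> = (C * f (j-1)) * (C * g (j-1))" using ef eg by simp
  also have "\<dots> = C * (C * (f (j-1) * g (j-1)))" by (simp add: algebra_simps)
  also have "\<dots> = C * ((k * (x + y + x * y) + C) * (f j * g j))" using ep by simp
  finally have "(k * x + C) * (k * y + C) * (f j * g j) = C * (k * (x + y + x * y) + C) * (f j * g j)"
    by (simp add: algebra_simps)
  moreover have "f j * g j \<noteq> 0" using fn gn by simp
  ultimately have "(k * x + C) * (k * y + C) = C * (k * (x + y + x * y) + C)"
    by simp
  then have "k * x * y * (k - C) = 0" by (simp add: algebra_simps)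
  moreover have "k - C > 0" using kC bj by simp
  moreover have "k > 0" using kC cj unfolding C_def by simp
  moreover have "x \<noteq> 0" "y \<noteq> 0" using f1 g1 unfolding x_def y_def by auto
  ultimately show False by simp
qed


lemma card_pos_mem: "finite V \<Longrightarrow> u \<in> {z\<in>V. P z} \<Longrightarrow> 0 < card {z\<in>V. P z}"
  by (subst card_gt_0_iff) auto

lemma graph_facts:
  assumes dr: "distance_regular V E D a b c"
  shows "a 0 = 0" and "\<forall>j. 1 \<le> j \<and> j < D \<longrightarrow> c j > 0 \<and> b j > 0 \<and> c j + a j + b j = b 0"
proof -
  have fin: "finite V" and ne: "V \<noteq> {}"
    and P: "\<forall>x y. E x y \<longrightarrow> x \<in> V \<and> y \<in> V \<and> x \<noteq> y \<and> E y x"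
    and conn: "\<forall>x\<in>V. \<forall>y\<in>V. \<exists>n. walk E x y n"
    and Ddef: "D = diameter V E"
    and DR: "\<forall>x\<in>V. \<forall>y\<in>V.
        c (gdist E x y) = card {z\<in>V. E y z \<and> gdist E x z + 1 = gdist E x y} \<and>
        a (gdist E x y) = card {z\<in>V. E y z \<and> gdist E x z = gdist E x y} \<and>
        b (gdist E x y) = card {z\<in>V. E y z \<and> gdist E x z = gdist E x y + 1}"
    using dr unfolding distance_regular_def connected_simple_graph_def by blast+
  have PV: "\<forall>u v. E u v \<longrightarrow> u \<in> V \<and> v \<in> V" using P by blast
  have g0: "gdist E x x = 0" for x
    using gdist_le[OF walk_nil, of E x] by simp
  have gw: "walk E x z (gdist E x z)" if xz: "x \<in> V" "z \<in> V" for x z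
  proof -
    obtain n where "walk E x z n" using bspec[OF bspec[OF conn xz(1)] xz(2)] by (erule exE)
    then show ?thesis by (rule gdist_walk)
  qed
  have gz: "z = x" if "x \<in> V" "z \<in> V" "gdist E x z = 0" for x z
    using gw[OF that(1,2)] that(3) walk_0 by fastforce
  have tri: "gdist E x y \<le> gdist E x z + 1" if "x \<in> V" "E z y" for x y z
  proof -
    have zV: "z \<in> V" using P that(2) by blast
    have "walk E x y (Suc (gdist E x z))" by (rule walk_snoc[OF gw[OF that(1) zV] that(2)])
    then have "gdist E x y \<le> Suc (gdist E x z)" by (rule gdist_le)
    then show ?thesis by simp
  qed
  have deg: "b 0 = card {z\<in>V. E y z}" if "y \<in> V" for y
  proof -
    have "b (gdist E y y) = card {z\<in>V. E y z \<and> gdist E y z = gdist E y y + 1}"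
      using DR that by blast
    then have "b 0 = card {z\<in>V. E y z \<and> gdist E y z = 0 + 1}"
      unfolding g0[of y] .
    moreover have "{z\<in>V. E y z \<and> gdist E y z = 0 + 1} = {z\<in>V. E y z}"
    proof safe
      fix z assume z: "z \<in> V" "E y z"
      have "gdist E y z \<le> 1" using tri[OF that z(2)] g0[of y] by simp
      moreover have "gdist E y z \<noteq> 0" using gz[OF that z(1)] z(2) P by blast
      ultimately show "gdist E y z = 0 + 1" by simp
    qed
    ultimately show ?thesis by simp
  qed
  obtain y0 where y0: "y0 \<in> V" using ne by blast
  have "a (gdist E y0 y0) = card {z\<in>V. E y0 z \<and> gdist E y0 z = gdist E y0 y0}"
    using DR y0 by blast
  then have "a 0 = card {z\<in>V. E y0 z \<and> gdist E y0 z = 0}"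
    unfolding g0[of y0] .
  moreover have "{z\<in>V. E y0 z \<and> gdist E y0 z = 0} = {}"
    using gz[OF y0] P by blast
  ultimately show "a 0 = 0" by simp
  have sum: "c j + a j + b j = b 0" if "x \<in> V" "y \<in> V" "gdist E x y = j" for x y j
  proof -
    define S1 where "S1 = {z\<in>V. E y z \<and> gdist E x z + 1 = j}"
    define S2 where "S2 = {z\<in>V. E y z \<and> gdist E x z = j}"
    define S3 where "S3 = {z\<in>V. E y z \<and> gdist E x z = j + 1}"
    have cs0: "c (gdist E x y) = card {z\<in>V. E y z \<and> gdist E x z + 1 = gdist E x y} \<and>
        a (gdist E x y) = card {z\<in>V. E y z \<and> gdist E x z = gdist E x y} \<and>
        b (gdist E x y) = card {z\<in>V. E y z \<and> gdist E x z = gdist E x y + 1}"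
      using DR that(1,2) by blast
    have cs: "c j = card S1" "a j = card S2" "b j = card S3"
      using cs0 unfolding S1_def S2_def S3_def that(3) by auto
    have "{z\<in>V. E y z} \<subseteq> S1 \<union> S2 \<union> S3"
    proof
      fix z assume "z \<in> {z\<in>V. E y z}"
      then have z: "z \<in> V" "E y z" by auto
      have "E z y" using z(2) P by blast
      then have "gdist E x y \<le> gdist E x z + 1" by (rule tri[OF that(1)])
      then have "j \<le> gdist E x z + 1" using that(3) by simp
      moreover have "gdist E x z \<le> j + 1" using tri[OF that(1) z(2)] that(3) by simp
      ultimately show "z \<in> S1 \<union> S2 \<union> S3" using z unfolding S1_def S2_def S3_def by auto
    qed
    moreover have "S1 \<union> S2 \<union> S3 \<subseteq> {z\<in>V. E y z}" unfolding S1_def S2_def S3_def by auto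
    ultimately have "{z\<in>V. E y z} = S1 \<union> S2 \<union> S3" by (rule equalityI)
    moreover have "finite S1" "finite S2" "finite S3" using fin unfolding S1_def S2_def S3_def by auto
    moreover have "S1 \<inter> S2 = {}" "(S1 \<union> S2) \<inter> S3 = {}" unfolding S1_def S2_def S3_def by auto
    ultimately have "card {z\<in>V. E y z} = card S1 + card S2 + card S3"
      by (simp add: card_Un_disjoint)
    then show ?thesis using cs deg[OF that(2)] by simp
  qed
  define M where "M = {gdist E x y | x y. x \<in> V \<and> y \<in> V}"
  have "M \<subseteq> (\<lambda>(x, y). gdist E x y) ` (V \<times> V)" unfolding M_def by auto
  moreover have "finite ((\<lambda>(x, y). gdist E x y) ` (V \<times> V))"
    using fin by (intro finite_imageI finite_cartesian_product)
  ultimately have "finite M" by (rule finite_subset)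
  moreover have "M \<noteq> {}" unfolding M_def using y0 by blast
  ultimately have "Max M \<in> M" by (rule Max_in)
  then obtain x0 w where xw: "x0 \<in> V" "w \<in> V" "gdist E x0 w = D"
    using Ddef unfolding M_def diameter_def by auto
  have lev: "\<exists>v\<in>V. gdist E x0 v = j \<and> walk E x0 v j" if "j \<le> D" for j
  proof -
    have "walk E x0 w (j + (D - j))" using gw[OF xw(1,2)] xw(3) that by simp
    then have "\<exists>v. walk E x0 v j \<and> walk E v w (D - j)" by (rule walk_split)
    then obtain v where v: "walk E x0 v j" "walk E v w (D - j)" by blast
    have vV: "v \<in> V" using walk_V[OF v(1) xw(1) PV] .
    have "gdist E x0 v \<le> j" using gdist_le[OF v(1)] .
    moreover have "\<not> gdist E x0 v < j"
    proof
      assume "gdist E x0 v < j"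
      have "walk E x0 w (gdist E x0 v + (D - j))" using walk_app[OF gw[OF xw(1) vV] v(2)] .
      then have "gdist E x0 w \<le> gdist E x0 v + (D - j)" by (rule gdist_le)
      then have "D \<le> gdist E x0 v + (D - j)" using xw(3) by simp
      then show False using \<open>gdist E x0 v < j\<close> that by simp
    qed
    ultimately show ?thesis using vV v(1) by auto
  qed
  have pred: "\<exists>u\<in>V. gdist E x0 u = j \<and> E u v" if vh: "v \<in> V" "gdist E x0 v = j + 1" "walk E x0 v (j+1)" for v j
  proof -
    have "\<exists>u. walk E x0 u j \<and> walk E u v 1" using vh(3) by (rule walk_split)
    then obtain u where u: "walk E x0 u j" "walk E u v 1" by blast
    from u(2) have Euv: "E u v" by (auto elim!: walk.cases)
    then have uV: "u \<in> V" using P by blast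
    have "gdist E x0 u \<le> j" using gdist_le[OF u(1)] .
    moreover have "j + 1 \<le> gdist E x0 u + 1" using tri[OF xw(1) Euv] vh(2) by simp
    ultimately show ?thesis using uV Euv by auto
  qed
  show "\<forall>j. 1 \<le> j \<and> j < D \<longrightarrow> c j > 0 \<and> b j > 0 \<and> c j + a j + b j = b 0"
  proof (intro allI impI conjI)
    fix j assume j: "1 \<le> j \<and> j < D"
    obtain v where v: "v \<in> V" "gdist E x0 v = (j - 1) + 1" "walk E x0 v ((j - 1) + 1)"
      using lev[of j] j by auto
    obtain u where u: "u \<in> V" "gdist E x0 u = j - 1" "E u v" using pred[OF v] by blast
    have "c (gdist E x0 v) = card {z\<in>V. E v z \<and> gdist E x0 z + 1 = gdist E x0 v}"
      using DR xw(1) v(1) by blast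
    moreover have "gdist E x0 v = j" using v(2) j by simp
    ultimately have "c j = card {z\<in>V. E v z \<and> gdist E x0 z + 1 = j}" by simp
    moreover have "E v u" using u(3) P by blast
    then have "u \<in> {z\<in>V. E v z \<and> gdist E x0 z + 1 = j}" using u(1,2) j by simp
    ultimately show "c j > 0" using card_pos_mem[OF fin] by metis
    obtain v' where v': "v' \<in> V" "gdist E x0 v' = j + 1" "walk E x0 v' (j + 1)"
      using lev[of "j+1"] j by auto
    obtain u' where u': "u' \<in> V" "gdist E x0 u' = j" "E u' v'" using pred[OF v'] by blast
    have "b (gdist E x0 u') = card {z\<in>V. E u' z \<and> gdist E x0 z = gdist E x0 u' + 1}"
      using DR xw(1) u'(1) by blast
    then have "b j = card {z\<in>V. E u' z \<and> gdist E x0 z = j + 1}" using u'(2) by simp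
    moreover have "v' \<in> {z\<in>V. E u' z \<and> gdist E x0 z = j + 1}" using v' u' by auto
    ultimately show "b j > 0" using card_pos_mem[OF fin] by metis
    show "c j + a j + b j = b 0" using sum[OF xw(1) u'(1,2)] .
  qed
qed


theorem lemma8p5:
  fixes V :: "'v set" and E :: "'v \<Rightarrow> 'v \<Rightarrow> bool"
    and D :: nat and a b c :: "nat \<Rightarrow> nat"
    and \<sigma> \<rho> :: "nat \<Rightarrow> real" and \<epsilon> :: real
  assumes "distance_regular V E D a b c"
    and "D \<ge> 3"
    and "is_pseudo_cosine D a b c \<sigma>" and "nontrivial_pc \<sigma>"
    and "is_pseudo_cosine D a b c \<rho>" and "nontrivial_pc \<rho>"
    and "tight_pair D a b c \<sigma> \<rho>"
    and "auxiliary_parameter D \<sigma> \<rho> \<epsilon>"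
    and "\<epsilon> \<noteq> 1" and "\<epsilon> \<noteq> -1"
  shows "\<forall>i\<in>{1..D}. \<sigma> (i - 1) \<noteq> \<sigma> i \<and> \<rho> (i - 1) \<noteq> \<rho> i"
proof -
  note gf = graph_facts[OF assms(1)]
  have cpos: "\<forall>j. 1 \<le> j \<and> j < D \<longrightarrow> c j > 0" using gf(2) by blast
  obtain t1 where p1: "pseudo_cosine D a b c t1 \<sigma>" using assms(3) unfolding is_pseudo_cosine_def by blast
  obtain t2 where p2: "pseudo_cosine D a b c t2 \<rho>" using assms(5) unfolding is_pseudo_cosine_def by blast
  obtain t3 where p3: "pseudo_cosine D a b c t3 (\<lambda>i. \<sigma> i * \<rho> i)"
    using assms(7) unfolding tight_pair_def is_pseudo_cosine_def by blast
  have s0: "\<sigma> 0 = 1" "\<rho> 0 = 1" using p1 p2 unfolding pseudo_cosine_def by auto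
  have s1: "\<sigma> 1 \<noteq> 1" "\<rho> 1 \<noteq> 1" using assms(4,6) unfolding nontrivial_pc_def by auto
  have both: False if j: "1 \<le> j" "j < D" and e: "\<sigma> (j+1) = \<sigma> j" "\<rho> (j+1) = \<rho> j" for j
  proof -
    have "\<sigma> j \<noteq> 0" using chain[OF p1 cpos, of j] e j by auto
    moreover have "\<rho> j \<noteq> 0" using chain[OF p2 cpos, of j] e j by auto
    moreover have "c j > 0 \<and> b j > 0 \<and> c j + a j + b j = b 0" using gf(2) j by blast
    ultimately show False
      using core[OF p1 p2 p3 gf(1) _ j _ _ _ s1 e] j by auto
  qed
  show ?thesis
  proof (intro ballI conjI notI)
    fix i assume i: "i \<in> {1..D}" and e: "\<sigma> (i - 1) = \<sigma> i"
    show False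
    proof (cases "i = 1")
      case True then show False using e s0 s1 by simp
    next
      case False
      define j where "j = i - 1"
      have j: "1 \<le> j" "j < D" "i = j + 1" using i False unfolding j_def by auto
      have ej: "\<sigma> (j+1) = \<sigma> j" using e j by simp
      have ax: "\<sigma> (j+1) * \<rho> (j+1) - \<sigma> j * \<rho> j = \<epsilon> * (\<sigma> j * \<rho> (j+1) - \<sigma> (j+1) * \<rho> j)"
      proof -
        have "j + 1 \<in> {1..D}" using j by simp
        then show ?thesis using assms(8) unfolding auxiliary_parameter_def
          by (metis add_diff_cancel_right')
      qed
      have "(1 - \<epsilon>) * \<sigma> j * (\<rho> (j+1) - \<rho> j) = 0" using ax ej by (simp add: algebra_simps)
      moreover have "\<sigma> j \<noteq> 0" using chain[OF p1 cpos, of j] ej j by auto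
      ultimately have "\<rho> (j+1) = \<rho> j" using assms(9) by simp
      then show False using both[OF j(1,2) ej] by simp
    qed
  next
    fix i assume i: "i \<in> {1..D}" and e: "\<rho> (i - 1) = \<rho> i"
    show False
    proof (cases "i = 1")
      case True then show False using e s0 s1 by simp
    next
      case False
      define j where "j = i - 1"
      have j: "1 \<le> j" "j < D" "i = j + 1" using i False unfolding j_def by auto
      have ej: "\<rho> (j+1) = \<rho> j" using e j by simp
      have ax: "\<sigma> (j+1) * \<rho> (j+1) - \<sigma> j * \<rho> j = \<epsilon> * (\<sigma> j * \<rho> (j+1) - \<sigma> (j+1) * \<rho> j)"
      proof -
        have "j + 1 \<in> {1..D}" using j by simp
        then show ?thesis using assms(8) unfolding auxiliary_parameter_def
          by (metis add_diff_cancel_right')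
      qed
      have "(1 + \<epsilon>) * \<rho> j * (\<sigma> (j+1) - \<sigma> j) = 0" using ax ej by (simp add: algebra_simps)
      moreover have "\<rho> j \<noteq> 0" using chain[OF p2 cpos, of j] ej j by auto
      moreover have "1 + \<epsilon> \<noteq> 0" using assms(10) by linarith
      ultimately have "\<sigma> (j+1) = \<sigma> j" by simp
      then show False using both[OF j(1,2) _ ej] by simp
    qed
  qed
qed

end
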